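(* Let $X$ be a random variable on $\{0,1\}^n$ and $Y$ uniform on $[n]$, independent of $X$. Suppose the statistical distance between the joint distribution of $(X_Y,Y)$ and that of $(U_1,Y)$ (with $U_1$ a uniform bit independent of $Y$) exceeds $\delta$. Then there exists $\alpha\in\{0,1\}^n$ with $$\Pr\Big[d(X,\alpha)\le\tfrac12-\tfrac{\delta}{2}\Big]>\delta,$$ where $d(\cdot,\cdot)$ is the relative Hamming distance.
   Context: $X_Y$ denotes the $Y$-th bit of $X$. The relative Hamming distance between $u,v\in\{0,1\}^n$ is $\frac1n|\{j:u_j\ne v_j\}|$. The statistical distance of two distributions $P,Q$ is $\frac12\sum_w|P(w)-Q(w)|$. *)

theory Defs
  imports "HOL-Probability.Probability"
begin

text \<open>Bit strings in {0,1}^n are boolean lists of length n; bit j (0-indexed) is xs ! j.\<close>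

definition rel_hamming :: "nat \<Rightarrow> bool list \<Rightarrow> bool list \<Rightarrow> real" where
  "rel_hamming n u v = real (card {j. j < n \<and> u ! j \<noteq> v ! j}) / real n"

definition stat_dist :: "'a pmf \<Rightarrow> 'a pmf \<Rightarrow> real" where
  "stat_dist P Q = (1/2) * (\<Sum>\<^sub>\<infinity> w. \<bar>pmf P w - pmf Q w\<bar>)"

end

theory Submission
  imports Defs
begin

theorem mainTheorem14:
  fixes n :: nat and X :: "bool list pmf" and \<delta> :: real
  assumes "n > 0"
    and "set_pmf X \<subseteq> {xs. length xs = n}"
    and "stat_dist
           (map_pmf (\<lambda>(x, i). (x ! i, i)) (pair_pmf X (pmf_of_set {0..<n})))
           (pair_pmf (pmf_of_set (UNIV :: bool set)) (pmf_of_set {0..<n})) > \<delta>"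
  shows "\<exists>\<alpha>. length \<alpha> = n \<and>
           measure_pmf.prob X {x. rel_hamming n x \<alpha> \<le> 1/2 - \<delta>/2} > \<delta>"
proof -
  define U where "U = pmf_of_set {0..<n}"
  define P where "P = map_pmf (\<lambda>(x, i). (x ! i, i)) (pair_pmf X U)"
  define Q where "Q = pair_pmf (pmf_of_set (UNIV :: bool set)) U"
  define q where "q i b = measure_pmf.prob X {x. x ! i = b}" for i b
  define p where "p i = q i True" for i
  have n0: "real n > 0" using assms(1) by simp
  have pmfU: "pmf U i = indicator {0..<n} i / real n" for i
    unfolding U_def using assms(1) by (subst pmf_of_set) auto
  have qF: "q i False = 1 - p i" for i
  proof -
    have "{x. x ! i = False} = space (measure_pmf X) - {x. x ! i = True}" by auto
    then show ?thesis unfolding p_def q_def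
      using measure_pmf.prob_compl[of "{x. x ! i = True}" X] by simp
  qed
  have p01: "0 \<le> p i" "p i \<le> 1" for i unfolding p_def q_def by auto
  have pmfP: "pmf P (b, i) = q i b * indicator {0..<n} i / real n" for b i
  proof -
    have "(\<lambda>(x, i). (x ! i, i)) -` {(b, i)} = {x. x ! i = b} \<times> {i}" by auto
    moreover have "countable {x :: bool list. x ! i = b}" by (rule countableI_type)
    ultimately have "pmf P (b, i) = q i b * measure_pmf.prob U {i}"
      unfolding P_def q_def pmf_map by (simp add: measure_pmf_prob_product)
    also have "measure_pmf.prob U {i} = pmf U i" by (simp add: measure_pmf_single)
    finally show ?thesis using pmfU by simp
  qed
  have pmfQ: "pmf Q (b, i) = indicator {0..<n} i / (2 * real n)" for b i
    unfolding Q_def pmf_pair pmfU by simp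
  have trm: "\<bar>pmf P w - pmf Q w\<bar> = (if snd w < n then \<bar>p (snd w) - 1/2\<bar> / real n else 0)" for w
  proof (cases w)
    case (Pair b i)
    show ?thesis
    proof (cases "i < n")
      case True
      have "\<bar>q i b / real n - 1 / (2 * real n)\<bar> = \<bar>q i b - 1/2\<bar> / real n"
        using n0 by (simp add: field_simps abs_divide)
      moreover have "\<bar>q i b - 1/2\<bar> = \<bar>p i - 1/2\<bar>"
        by (cases b) (auto simp: qF p_def)
      ultimately show ?thesis using True Pair by (simp add: pmfP pmfQ)
    next
      case False
      then show ?thesis using Pair by (simp add: pmfP pmfQ)
    qed
  qed
  define F where "F = (UNIV :: bool set) \<times> {0..<n}"
  have "(\<Sum>\<^sub>\<infinity> w. \<bar>pmf P w - pmf Q w\<bar>) = (\<Sum>\<^sub>\<infinity> w\<in>F. \<bar>pmf P w - pmf Q w\<bar>)"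
    by (rule infsum_cong_neutral) (auto simp: trm F_def)
  also have "\<dots> = (\<Sum>w\<in>F. \<bar>pmf P w - pmf Q w\<bar>)"
    by (simp add: F_def)
  also have "\<dots> = (\<Sum>b\<in>(UNIV::bool set). \<Sum>i\<in>{0..<n}. \<bar>p i - 1/2\<bar> / real n)"
    unfolding F_def sum.cartesian_product by (rule sum.cong) (auto simp: trm)
  also have "\<dots> = 2 * (\<Sum>i<n. \<bar>p i - 1/2\<bar>) / real n"
    by (simp add: UNIV_bool sum_divide_distrib[symmetric] atLeast0LessThan)
  finally have SD: "stat_dist P Q = (\<Sum>i<n. \<bar>p i - 1/2\<bar>) / real n"
    unfolding stat_dist_def by simp
  define \<alpha> where "\<alpha> = map (\<lambda>i. p i \<ge> 1/2) [0..<n]"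
  have len: "length \<alpha> = n" unfolding \<alpha>_def by simp
  define d where "d x = rel_hamming n x \<alpha>" for x
  have dsum: "d x = (\<Sum>j<n. indicator {x. x ! j \<noteq> \<alpha> ! j} x) / real n" for x
  proof -
    have "real (card {j. j < n \<and> x ! j \<noteq> \<alpha> ! j}) = (\<Sum>j<n. indicator {x. x ! j \<noteq> \<alpha> ! j} x)"
    proof -
      have e: "{..<n} \<inter> {j. x ! j \<noteq> \<alpha> ! j} = {j. j < n \<and> x ! j \<noteq> \<alpha> ! j}" by auto
      have "(\<Sum>j<n. indicator {x. x ! j \<noteq> \<alpha> ! j} x) = real (card ({..<n} \<inter> {j. x ! j \<noteq> \<alpha> ! j}))"
        by (simp add: indicator_def sum.If_cases)
      then show ?thesis unfolding e by simp
    qed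
    then show ?thesis unfolding d_def rel_hamming_def by simp
  qed
  have probj: "measure_pmf.prob X {x. x ! j \<noteq> \<alpha> ! j} = 1/2 - \<bar>p j - 1/2\<bar>" if "j < n" for j
  proof -
    have aj: "\<alpha> ! j = (p j \<ge> 1/2)" using that unfolding \<alpha>_def by simp
    have "{x. x ! j \<noteq> \<alpha> ! j} = {x. x ! j = (\<not> \<alpha> ! j)}" by auto
    then have "measure_pmf.prob X {x. x ! j \<noteq> \<alpha> ! j} = q j (\<not> \<alpha> ! j)" unfolding q_def by simp
    then show ?thesis using aj qF by (auto simp: p_def)
  qed
  have Ed: "measure_pmf.expectation X d = 1/2 - stat_dist P Q"
  proof -
    have "measure_pmf.expectation X d
        = (\<Sum>j<n. measure_pmf.expectation X (indicator {x. x ! j \<noteq> \<alpha> ! j})) / real n"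
      unfolding dsum
      by (subst Bochner_Integration.integral_sum[symmetric])
         (auto intro!: measure_pmf.integrable_const_bound[where B=1])
    also have "\<dots> = (\<Sum>j<n. 1/2 - \<bar>p j - 1/2\<bar>) / real n"
    proof -
      have "measure_pmf.expectation X (indicator {x. x ! j \<noteq> \<alpha> ! j}) = 1/2 - \<bar>p j - 1/2\<bar>"
        if "j < n" for j
        using probj[OF that] by simp
      then show ?thesis by (intro arg_cong2[where f="(/)"] sum.cong) auto
    qed
    also have "\<dots> = 1/2 - stat_dist P Q"
    proof -
      have "(\<Sum>j<n. 1/2 - \<bar>p j - 1/2\<bar>) = real n / 2 - (\<Sum>j<n. \<bar>p j - 1/2\<bar>)"
        by (simp add: sum_subtractf)
      then show ?thesis using n0 by (simp add: SD diff_divide_distrib)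
    qed
    finally show ?thesis .
  qed
  have dnn: "d x \<ge> 0" for x unfolding d_def rel_hamming_def by simp
  have dle: "d x \<le> 1" for x
  proof -
    have "card {j. j < n \<and> x ! j \<noteq> \<alpha> ! j} \<le> card {..<n}"
      by (rule card_mono) auto
    then show ?thesis unfolding d_def rel_hamming_def using n0 by (simp add: divide_le_eq)
  qed
  have Ednn: "measure_pmf.expectation X d \<ge> 0" by (simp add: dnn)
  have SDlt: "\<delta> < stat_dist P Q" using assms(3) unfolding P_def Q_def U_def by simp
  define t where "t = 1/2 - \<delta>/2"
  define A where "A = {x. d x \<le> t}"
  have bound: "t * indicator (- A) x \<le> d x" for x
    by (auto simp: A_def indicator_def dnn)
  have "t * (1 - measure_pmf.prob X A) = measure_pmf.expectation X (\<lambda>x. t * indicator (- A) x)"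
  proof -
    have "measure_pmf.prob X (- A) = 1 - measure_pmf.prob X A"
      using measure_pmf.prob_compl[of A X] by (simp add: Compl_eq_Diff_UNIV)
    then show ?thesis by simp
  qed
  also have "\<dots> \<le> measure_pmf.expectation X d"
    by (rule integral_mono) (auto intro!: measure_pmf.integrable_const_bound[where B="\<bar>t\<bar>"]
        measure_pmf.integrable_const_bound[where B=1] simp: bound dnn dle)
  finally have key: "t * (1 - measure_pmf.prob X A) \<le> measure_pmf.expectation X d" .
  have "measure_pmf.prob X A > \<delta>"
  proof (rule ccontr)
    assume "\<not> ?thesis"
    then have le: "measure_pmf.prob X A \<le> \<delta>" by simp
    have "\<delta> < 1/2" using SDlt Ed Ednn by simp
    then have tpos: "t \<ge> 0" unfolding t_def by simp
    have "t * (1 - \<delta>) \<le> t * (1 - measure_pmf.prob X A)"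
      using le tpos by (intro mult_left_mono) auto
    then have "t * (1 - \<delta>) < 1/2 - \<delta>" using key Ed SDlt by simp
    moreover have "t * (1 - \<delta>) \<ge> 1/2 - \<delta>"
      unfolding t_def by (simp add: algebra_simps power2_eq_square)
    ultimately show False by simp
  qed
  then show ?thesis using len unfolding A_def d_def t_def by blast
qed

end
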